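(* Let $r\ge1$ and let $\mathcal V$ be a $(3,2r)$-modular variety. Then for every $\ell\ge1$, $\mathcal V$ satisfies $$A_\ell(\alpha,\beta,\gamma)\subseteq\alpha\beta\circ_{2r^\ell}\alpha\gamma$$ for all congruences $\alpha,\beta,\gamma$; that is, $D^*_{\mathcal V}(\ell)\le 2r^\ell$.
   Context: $\circ$ is relational composition, juxtaposition is intersection. For relations $X,Y$ and $m\ge1$, $X\circ_m Y$ denotes $X\circ Y\circ X\circ\cdots$ with $m$ factors. A variety is $(3,k)$-modular if each of its algebras satisfies $\alpha(\beta\circ\alpha\gamma\circ\beta)\subseteq\alpha\beta\circ_k\alpha\gamma$ for all congruences. The relation terms $A_\ell(\alpha,\beta,\gamma)$ are defined recursively: $A_1(\alpha,\beta,\gamma)=\alpha(\beta\circ\alpha\gamma\circ\beta)$ and $A_{\ell+1}(\alpha,\beta,\gamma)=\alpha\big(\beta\circ A_\ell(\alpha,\gamma,\beta)\circ\beta\big)$ (so e.g. $A_2=\alpha(\beta\circ\alpha(\gamma\circ\alpha\beta\circ\gamma)\circ\beta)$). $D^*_{\mathcal V}(\ell)$ is the least $k$ such that $\mathcal V$ satisfies $A_\ell(\alpha,\beta,\gamma)\subseteq\alpha\beta\circ_k\alpha\gamma$. *)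

theory Defs
  imports Main
begin

datatype ('f, 'v) trm = Var 'v | Fn 'f "('f, 'v) trm list"

fun wf_trm :: "('f \<Rightarrow> nat) \<Rightarrow> ('f, 'v) trm \<Rightarrow> bool" where
  "wf_trm ar (Var v) = True"
| "wf_trm ar (Fn f ts) = (length ts = ar f \<and> (\<forall>t\<in>set ts. wf_trm ar t))"

fun eval_trm :: "('f \<Rightarrow> 'a list \<Rightarrow> 'a) \<Rightarrow> ('v \<Rightarrow> 'a) \<Rightarrow> ('f, 'v) trm \<Rightarrow> 'a" where
  "eval_trm F \<sigma> (Var v) = \<sigma> v"
| "eval_trm F \<sigma> (Fn f ts) = F f (map (eval_trm F \<sigma>) ts)"

definition algebra :: "('f \<Rightarrow> nat) \<Rightarrow> 'a set \<Rightarrow> ('f \<Rightarrow> 'a list \<Rightarrow> 'a) \<Rightarrow> bool" where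
  "algebra ar A F \<longleftrightarrow> (\<forall>f xs. length xs = ar f \<and> set xs \<subseteq> A \<longrightarrow> F f xs \<in> A)"

definition satisfies :: "'a set \<Rightarrow> ('f \<Rightarrow> 'a list \<Rightarrow> 'a) \<Rightarrow> (('f, nat) trm \<times> ('f, nat) trm) set \<Rightarrow> bool" where
  "satisfies A F \<Sigma> \<longleftrightarrow> (\<forall>(s, t)\<in>\<Sigma>. \<forall>\<sigma>. range \<sigma> \<subseteq> A \<longrightarrow> eval_trm F \<sigma> s = eval_trm F \<sigma> t)"

definition in_variety :: "('f \<Rightarrow> nat) \<Rightarrow> (('f, nat) trm \<times> ('f, nat) trm) set \<Rightarrow> 'a set \<Rightarrow> ('f \<Rightarrow> 'a list \<Rightarrow> 'a) \<Rightarrow> bool" where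
  "in_variety ar \<Sigma> A F \<longleftrightarrow> algebra ar A F \<and> satisfies A F \<Sigma>"

definition congruence :: "('f \<Rightarrow> nat) \<Rightarrow> 'a set \<Rightarrow> ('f \<Rightarrow> 'a list \<Rightarrow> 'a) \<Rightarrow> 'a rel \<Rightarrow> bool" where
  "congruence ar A F \<theta> \<longleftrightarrow> equiv A \<theta> \<and>
     (\<forall>f xs ys. length xs = ar f \<and> length ys = ar f \<and>
        list_all2 (\<lambda>x y. (x, y) \<in> \<theta>) xs ys \<longrightarrow> (F f xs, F f ys) \<in> \<theta>)"

text \<open>X \<circ>_m Y = X \<circ> Y \<circ> X \<circ> ... with m factors (m \<ge> 1); value for m = 0 is Id (unused).\<close>
fun alt_comp :: "'a rel \<Rightarrow> 'a rel \<Rightarrow> nat \<Rightarrow> 'a rel" where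
  "alt_comp X Y 0 = Id"
| "alt_comp X Y (Suc 0) = X"
| "alt_comp X Y (Suc (Suc m)) = X O alt_comp Y X (Suc m)"

text \<open>A_l(\<alpha>,\<beta>,\<gamma>) for l \<ge> 1; the value at l = 0 is irrelevant (set to {}).\<close>
fun Arel :: "nat \<Rightarrow> 'a rel \<Rightarrow> 'a rel \<Rightarrow> 'a rel \<Rightarrow> 'a rel" where
  "Arel 0 \<alpha> \<beta> \<gamma> = {}"
| "Arel (Suc 0) \<alpha> \<beta> \<gamma> = \<alpha> \<inter> (\<beta> O (\<alpha> \<inter> \<gamma>) O \<beta>)"
| "Arel (Suc (Suc l)) \<alpha> \<beta> \<gamma> = \<alpha> \<inter> (\<beta> O Arel (Suc l) \<alpha> \<gamma> \<beta> O \<beta>)"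

definition modular3_alg :: "('f \<Rightarrow> nat) \<Rightarrow> 'a set \<Rightarrow> ('f \<Rightarrow> 'a list \<Rightarrow> 'a) \<Rightarrow> nat \<Rightarrow> bool" where
  "modular3_alg ar A F k \<longleftrightarrow> (\<forall>\<alpha> \<beta> \<gamma>. congruence ar A F \<alpha> \<and> congruence ar A F \<beta> \<and> congruence ar A F \<gamma> \<longrightarrow>
      \<alpha> \<inter> (\<beta> O (\<alpha> \<inter> \<gamma>) O \<beta>) \<subseteq> alt_comp (\<alpha> \<inter> \<beta>) (\<alpha> \<inter> \<gamma>) k)"

end

theory Submission imports Defs begin

fun tsubst :: "('v \<Rightarrow> ('f,'w) trm) \<Rightarrow> ('f,'v) trm \<Rightarrow> ('f,'w) trm" where
  "tsubst \<tau> (Var v) = \<tau> v"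
| "tsubst \<tau> (Fn f ts) = Fn f (map (tsubst \<tau>) ts)"

lemma eval_tsubst: "eval_trm F \<sigma> (tsubst \<tau> t) = eval_trm F (\<lambda>v. eval_trm F \<sigma> (\<tau> v)) t"
  by (induction t) (simp_all add: o_def cong: map_cong)

lemma eval_in: "algebra ar A F \<Longrightarrow> wf_trm ar t \<Longrightarrow> range \<sigma> \<subseteq> A \<Longrightarrow> eval_trm F \<sigma> t \<in> A"
proof (induction t)
  case (Var x) then show ?case by auto
next
  case (Fn f ts)
  have "set (map (eval_trm F \<sigma>) ts) \<subseteq> A" using Fn by auto
  moreover have "length (map (eval_trm F \<sigma>) ts) = ar f" using Fn.prems(2) by simp
  ultimately show ?case using Fn.prems(1) unfolding algebra_def by simp
qed

lemma cong_dom: "congruence ar A F \<theta> \<Longrightarrow> (a,b) \<in> \<theta> \<Longrightarrow> a \<in> A \<and> b \<in> A"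
  unfolding congruence_def equiv_def refl_on_def by auto
lemma cong_refl: "congruence ar A F \<theta> \<Longrightarrow> a \<in> A \<Longrightarrow> (a,a) \<in> \<theta>"
  unfolding congruence_def equiv_def refl_on_def by auto
lemma cong_sym: "congruence ar A F \<theta> \<Longrightarrow> (a,b) \<in> \<theta> \<Longrightarrow> (b,a) \<in> \<theta>"
  unfolding congruence_def equiv_def by (auto dest: symD)
lemma cong_trans: "congruence ar A F \<theta> \<Longrightarrow> (a,b) \<in> \<theta> \<Longrightarrow> (b,c) \<in> \<theta> \<Longrightarrow> (a,c) \<in> \<theta>"
  unfolding congruence_def equiv_def by (auto dest: transD)

lemma eval_cong: "congruence ar A F \<theta> \<Longrightarrow> wf_trm ar t \<Longrightarrow> (\<forall>v. (\<sigma> v, \<sigma>' v) \<in> \<theta>)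
   \<Longrightarrow> (eval_trm F \<sigma> t, eval_trm F \<sigma>' t) \<in> \<theta>"
proof (induction t)
  case (Var x) then show ?case by auto
next
  case (Fn f ts)
  have "list_all2 (\<lambda>x y. (x, y) \<in> \<theta>) (map (eval_trm F \<sigma>) ts) (map (eval_trm F \<sigma>') ts)"
    using Fn by (auto simp: list_all2_conv_all_nth)
  then show ?case using Fn(2,3) unfolding congruence_def by auto
qed

fun A' :: "nat \<Rightarrow> 'a rel \<Rightarrow> 'a rel \<Rightarrow> 'a rel \<Rightarrow> 'a rel" where
  "A' 0 \<alpha> \<beta> \<gamma> = \<alpha> \<inter> \<beta>"
| "A' (Suc l) \<alpha> \<beta> \<gamma> = \<alpha> \<inter> (\<beta> O A' l \<alpha> \<gamma> \<beta> O \<beta>)"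

lemma Arel_A': "Arel (Suc l) \<alpha> \<beta> \<gamma> = A' (Suc l) \<alpha> \<beta> \<gamma>"
  by (induction l arbitrary: \<beta> \<gamma>) auto

lemma A'_sub: "A' j \<alpha> \<beta> \<gamma> \<subseteq> \<alpha>"
  by (cases j) auto

lemma alt2: "alt_comp X Y (Suc (Suc k)) = X O Y O alt_comp X Y k"
  by (cases k) auto

lemma alt_relpow: "alt_comp X Y (2*n) = (X O Y) ^^ n"
proof (induction n)
  case 0 then show ?case by simp
next
  case (Suc n)
  have "alt_comp X Y (2 * Suc n) = X O Y O alt_comp X Y (2*n)"
    using alt2[of X Y "2*n"] by simp
  also have "\<dots> = (X O Y) O (X O Y) ^^ n" using Suc by auto
  also have "\<dots> = (X O Y) ^^ Suc n" by (simp add: relpow_commute)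
  finally show ?case .
qed

lemma relpow_conv: "(p,q) \<in> (S O R) ^^ n \<Longrightarrow> sym R \<Longrightarrow> sym S \<Longrightarrow> (q,p) \<in> (R O S) ^^ n"
proof (induction n arbitrary: q)
  case 0 then show ?case by auto
next
  case (Suc n)
  from Suc.prems(1) obtain t u where "(p,t) \<in> (S O R) ^^ n" "(t,u) \<in> S" "(u,q) \<in> R"
    by (auto elim: relpow_Suc_E)
  then have "(t,p) \<in> (R O S) ^^ n" "(q,u) \<in> R" "(u,t) \<in> S" using Suc by (auto dest: symD)
  then show ?case by (meson relcompI relpow_Suc_I2)
qed

lemma chain_ex: "(p,q) \<in> (R O S) ^^ n \<Longrightarrow> \<exists>e. e 0 = p \<and> e (2*n) = q \<and>
   (\<forall>j<n. (e (2*j), e (2*j+1)) \<in> R \<and> (e (2*j+1), e (2*j+2)) \<in> S)"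
proof (induction n arbitrary: q)
  case 0 then show ?case by (intro exI[of _ "\<lambda>_. p"]) auto
next
  case (Suc n)
  from Suc.prems(1) obtain t u where t: "(p,t) \<in> (R O S) ^^ n" "(t,u) \<in> R" "(u,q) \<in> S"
    by (auto elim: relpow_Suc_E)
  from Suc.IH[OF t(1)] obtain e where e: "e 0 = p" "e (2*n) = t"
    "\<forall>j<n. (e (2*j), e (2*j+1)) \<in> R \<and> (e (2*j+1), e (2*j+2)) \<in> S" by blast
  define e' where "e' = e(2*n+1 := u, 2*n+2 := q)"
  have "\<forall>j<Suc n. (e' (2*j), e' (2*j+1)) \<in> R \<and> (e' (2*j+1), e' (2*j+2)) \<in> S"
  proof (intro allI impI)
    fix j assume "j < Suc n"
    then consider "j < n" | "j = n" by linarith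
    then show "(e' (2*j), e' (2*j+1)) \<in> R \<and> (e' (2*j+1), e' (2*j+2)) \<in> S"
    proof cases
      case 1
      then have "2*j \<noteq> 2*n+1" "2*j \<noteq> 2*n+2" "2*j+1 \<noteq> 2*n+1" "2*j+1 \<noteq> 2*n+2"
        "2*j+2 \<noteq> 2*n+1" "2*j+2 \<noteq> 2*n+2" by auto
      then have "e' (2*j) = e (2*j)" "e' (2*j+1) = e (2*j+1)" "e' (2*j+2) = e (2*j+2)"
        unfolding e'_def by (simp_all del: mult_2 add_2_eq_Suc' add_2_eq_Suc)
      then show ?thesis using e(3) 1 by metis
    next
      case 2 then show ?thesis using e t unfolding e'_def by auto
    qed
  qed
  moreover have "e' 0 = p" "e' (2 * Suc n) = q" using e unfolding e'_def by auto
  ultimately show ?case by blast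
qed


lemma poly_lemma:
  assumes pres: "\<And>\<theta> a b a' b'. congruence ar A F \<theta> \<Longrightarrow> (a,a')\<in>\<theta> \<Longrightarrow> (b,b')\<in>\<theta> \<Longrightarrow>
      (f a b, f a' b') \<in> \<theta> \<and> (g a b, g a' b') \<in> \<theta>"
    and diag: "\<And>a. a \<in> A \<Longrightarrow> f a a = g a a"
    and ca: "congruence ar A F \<alpha>"
  shows "congruence ar A F \<beta> \<Longrightarrow> congruence ar A F \<gamma> \<Longrightarrow> (u,v) \<in> A' j \<alpha> \<beta> \<gamma> \<Longrightarrow>
     (f u v, g u v) \<in> \<alpha> \<Longrightarrow> (f u v, g u v) \<in> A' j \<alpha> \<beta> \<gamma>"
proof (induction j arbitrary: \<beta> \<gamma> u v)
  case 0
  then have uv: "(u,v) \<in> \<beta>" by auto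
  then have u: "u \<in> A" using cong_dom[OF 0(1)] by blast
  have "(f u v, f u u) \<in> \<beta>" using pres[OF 0(1) cong_refl[OF 0(1) u] cong_sym[OF 0(1) uv]] by blast
  moreover have "(g u u, g u v) \<in> \<beta>" using pres[OF 0(1) cong_refl[OF 0(1) u] uv] by blast
  ultimately have "(f u v, g u v) \<in> \<beta>" using diag[OF u] cong_trans[OF 0(1)] by metis
  then show ?case using 0 by auto
next
  case (Suc j)
  from Suc.prems(3) obtain u' v' where uu: "(u,u') \<in> \<beta>" and uv: "(u',v') \<in> A' j \<alpha> \<gamma> \<beta>"
    and vv: "(v',v) \<in> \<beta>" by auto
  have uva: "(u',v') \<in> \<alpha>" using uv A'_sub by blast
  then have u': "u' \<in> A" using cong_dom[OF ca] by blast
  have "(f u' v', f u' u') \<in> \<alpha>" using pres[OF ca cong_refl[OF ca u'] cong_sym[OF ca uva]] by blast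
  moreover have "(g u' u', g u' v') \<in> \<alpha>" using pres[OF ca cong_refl[OF ca u'] uva] by blast
  ultimately have "(f u' v', g u' v') \<in> \<alpha>" using diag[OF u'] cong_trans[OF ca] by metis
  then have m: "(f u' v', g u' v') \<in> A' j \<alpha> \<gamma> \<beta>" using Suc.IH[OF Suc.prems(2,1) uv] by blast
  have "(f u v, f u' v') \<in> \<beta>" using pres[OF Suc.prems(1) uu cong_sym[OF Suc.prems(1) vv]] by blast
  moreover have "(g u' v', g u v) \<in> \<beta>" using pres[OF Suc.prems(1) cong_sym[OF Suc.prems(1) uu] vv] by blast
  ultimately show ?case using m Suc.prems(4) by auto
qed

lemma absorb:
  assumes cb: "congruence ar A F \<beta>" and ca: "congruence ar A F \<alpha>"
    and "(a,b) \<in> \<alpha> \<inter> \<beta>" and "(b,c) \<in> ((\<alpha> \<inter> \<beta>) O (\<alpha> \<inter> \<gamma>)) ^^ N" and "N \<ge> 1"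
  shows "(a,c) \<in> ((\<alpha> \<inter> \<beta>) O (\<alpha> \<inter> \<gamma>)) ^^ N"
proof -
  obtain N' where N: "N = Suc N'" using assms(5) by (cases N) auto
  from assms(4) obtain b2 where "(b,b2) \<in> (\<alpha> \<inter> \<beta>) O (\<alpha> \<inter> \<gamma>)"
    "(b2,c) \<in> ((\<alpha> \<inter> \<beta>) O (\<alpha> \<inter> \<gamma>)) ^^ N'"
    unfolding N by (rule relpow_Suc_E2)
  then obtain b1 where "(b,b1) \<in> \<alpha> \<inter> \<beta>" "(b1,b2) \<in> \<alpha> \<inter> \<gamma>"
    "(b2,c) \<in> ((\<alpha> \<inter> \<beta>) O (\<alpha> \<inter> \<gamma>)) ^^ N'" by blast
  moreover have "(a,b1) \<in> \<alpha> \<inter> \<beta>" using assms(3) calculation(1) cong_trans[OF ca] cong_trans[OF cb] by blast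
  ultimately show ?thesis unfolding N by (meson relcompI relpow_Suc_I2)
qed

lemma main_abstract:
  fixes m :: "nat \<Rightarrow> 'a \<Rightarrow> 'a \<Rightarrow> 'a \<Rightarrow> 'a \<Rightarrow> 'a"
  assumes r: "r \<ge> 1"
    and mpres: "\<And>i \<theta> a b c d a' b' c' d'. i \<le> 2*r \<Longrightarrow> congruence ar A F \<theta> \<Longrightarrow> (a,a')\<in>\<theta> \<Longrightarrow>
        (b,b')\<in>\<theta> \<Longrightarrow> (c,c')\<in>\<theta> \<Longrightarrow> (d,d')\<in>\<theta> \<Longrightarrow> (m i a b c d, m i a' b' c' d') \<in> \<theta>"
    and m0: "\<And>a b c d. a\<in>A \<Longrightarrow> b\<in>A \<Longrightarrow> c\<in>A \<Longrightarrow> d\<in>A \<Longrightarrow> m 0 a b c d = a"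
    and mr: "\<And>a b c d. a\<in>A \<Longrightarrow> b\<in>A \<Longrightarrow> c\<in>A \<Longrightarrow> d\<in>A \<Longrightarrow> m (2*r) a b c d = d"
    and hE: "\<And>j a d. j < r \<Longrightarrow> a\<in>A \<Longrightarrow> d\<in>A \<Longrightarrow> m (2*j) a a d d = m (2*j+1) a a d d"
    and hO: "\<And>j a b d. j < r \<Longrightarrow> a\<in>A \<Longrightarrow> b\<in>A \<Longrightarrow> d\<in>A \<Longrightarrow> m (2*j+1) a b b d = m (2*j+2) a b b d"
    and hA1: "\<And>j a b. j < r \<Longrightarrow> a\<in>A \<Longrightarrow> b\<in>A \<Longrightarrow> m (2*j) a b b a = m (2*j+1) a b b a"
    and hA2: "\<And>j a b. j < r \<Longrightarrow> a\<in>A \<Longrightarrow> b\<in>A \<Longrightarrow> m (2*j+1) a b b a = m (2*j+2) a b b a"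
  shows "congruence ar A F \<alpha> \<Longrightarrow> congruence ar A F \<beta> \<Longrightarrow> congruence ar A F \<gamma> \<Longrightarrow>
     A' l \<alpha> \<beta> \<gamma> \<subseteq> ((\<alpha> \<inter> \<beta>) O (\<alpha> \<inter> \<gamma>)) ^^ (r ^ l)"
proof (induction l arbitrary: \<beta> \<gamma>)
  case 0
  show ?case
  proof
    fix p assume "p \<in> A' 0 \<alpha> \<beta> \<gamma>"
    then obtain a b where p: "p = (a,b)" "(a,b) \<in> \<alpha> \<inter> \<beta>" by (cases p) auto
    then have "b \<in> A" using cong_dom[OF 0(1)] by blast
    then have "(b,b) \<in> \<alpha> \<inter> \<gamma>" using cong_refl[OF 0(1)] cong_refl[OF 0(3)] by blast
    then show "p \<in> ((\<alpha> \<inter> \<beta>) O (\<alpha> \<inter> \<gamma>)) ^^ (r ^ 0)" using p by auto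
  qed
next
  case (Suc l)
  note ca = Suc.prems(1) and cb = Suc.prems(2) and cg = Suc.prems(3)
  define N where "N = r ^ l"
  have N1: "N \<ge> 1" using r unfolding N_def by simp
  define T where "T = (\<alpha> \<inter> \<beta>) O (\<alpha> \<inter> \<gamma>)"
  show ?case
  proof
    fix p assume "p \<in> A' (Suc l) \<alpha> \<beta> \<gamma>"
    then obtain x w y z where p: "p = (x,w)" and xw: "(x,w) \<in> \<alpha>" and xy: "(x,y) \<in> \<beta>"
      and yz: "(y,z) \<in> A' l \<alpha> \<gamma> \<beta>" and zw: "(z,w) \<in> \<beta>" by (cases p) auto
    have yza: "(y,z) \<in> \<alpha>" using yz A'_sub by blast
    have A: "x \<in> A" "y \<in> A" "z \<in> A" "w \<in> A" using cong_dom[OF ca xw] cong_dom[OF ca yza] by auto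
    have alpha: "(m i x y z w, m i' x y z w) \<in> \<alpha>"
      if "i \<le> 2*r" "i' \<le> 2*r" "m i x y y x = m i' x y y x" for i i'
    proof -
      have "(m i x y z w, m i x y y x) \<in> \<alpha>"
        using mpres[OF that(1) ca cong_refl[OF ca A(1)] cong_refl[OF ca A(2)] cong_sym[OF ca yza]
          cong_sym[OF ca xw]] .
      moreover have "(m i' x y y x, m i' x y z w) \<in> \<alpha>"
        using mpres[OF that(2) ca cong_refl[OF ca A(1)] cong_refl[OF ca A(2)] yza xw] .
      ultimately show ?thesis using that(3) cong_trans[OF ca] by metis
    qed
    have step: "(m (2*j) x y z w, m (2*j+2) x y z w) \<in> T ^^ N" if j: "j < r" for j
    proof -
      have i1: "2*j \<le> 2*r" "2*j+1 \<le> 2*r" "2*j+2 \<le> 2*r" using j by auto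
      have e1: "(m (2*j) x y z w, m (2*j+1) x y z w) \<in> \<alpha>"
        using alpha[OF i1(1,2) hA1[OF j A(1,2)]] .
      have "(m (2*j) x y z w, m (2*j) x x w w) \<in> \<beta>"
        using mpres[OF i1(1) cb cong_refl[OF cb A(1)] cong_sym[OF cb xy] zw cong_refl[OF cb A(4)]] .
      moreover have "(m (2*j+1) x x w w, m (2*j+1) x y z w) \<in> \<beta>"
        using mpres[OF i1(2) cb cong_refl[OF cb A(1)] xy cong_sym[OF cb zw] cong_refl[OF cb A(4)]] .
      ultimately have e2: "(m (2*j) x y z w, m (2*j+1) x y z w) \<in> \<beta>"
        using hE[OF j A(1,4)] cong_trans[OF cb] by metis
      have o1: "(m (2*j+2) x y z w, m (2*j+1) x y z w) \<in> \<alpha>"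
        using alpha[OF i1(3,2) hA2[OF j A(1,2), symmetric]] .
      have "(m (2*j+2) x y z w, m (2*j+1) x y z w) \<in> A' l \<alpha> \<gamma> \<beta>"
      proof (rule poly_lemma[where f="\<lambda>b c. m (2*j+2) x b c w" and g="\<lambda>b c. m (2*j+1) x b c w"
            and ar=ar and A=A and F=F, OF _ _ ca cg cb yz o1])
        fix \<theta> a b a' b' assume c: "congruence ar A F \<theta>" "(a,a')\<in>\<theta>" "(b,b')\<in>\<theta>"
        show "(m (2*j+2) x a b w, m (2*j+2) x a' b' w) \<in> \<theta> \<and> (m (2*j+1) x a b w, m (2*j+1) x a' b' w) \<in> \<theta>"
          using mpres[OF i1(3) c(1) cong_refl[OF c(1) A(1)] c(2,3) cong_refl[OF c(1) A(4)]]
            mpres[OF i1(2) c(1) cong_refl[OF c(1) A(1)] c(2,3) cong_refl[OF c(1) A(4)]] by blast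
      next
        fix a assume "a \<in> A"
        then show "m (2*j+2) x a a w = m (2*j+1) x a a w" using hO[OF j A(1) _ A(4)] by metis
      qed
      then have "(m (2*j+2) x y z w, m (2*j+1) x y z w) \<in> ((\<alpha> \<inter> \<gamma>) O (\<alpha> \<inter> \<beta>)) ^^ N"
        using Suc.IH[OF ca cg cb] unfolding N_def by blast
      then have "(m (2*j+1) x y z w, m (2*j+2) x y z w) \<in> T ^^ N"
        unfolding T_def
        by (rule relpow_conv) (auto intro!: symI dest: cong_sym[OF ca] cong_sym[OF cb] cong_sym[OF cg])
      then show ?thesis using absorb[OF cb ca _ _ N1] e1 e2 unfolding T_def by blast
    qed
    have "j \<le> r \<Longrightarrow> (x, m (2*j) x y z w) \<in> T ^^ (N*j)" for j
    proof (induction j)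
      case 0 then show ?case using m0[OF A] by simp
    next
      case (Suc j)
      then have "(x, m (2*j) x y z w) \<in> T ^^ (N*j)" by simp
      moreover have "(m (2*j) x y z w, m (2*Suc j) x y z w) \<in> T ^^ N"
        using step[of j] Suc.prems by simp
      ultimately have "(x, m (2*Suc j) x y z w) \<in> T ^^ (N*j + N)" by (rule relpow_trans)
      then show ?case by (simp add: add.commute)
    qed
    from this[of r] have "(x, w) \<in> T ^^ (N*r)" using mr[OF A] by simp
    then show "p \<in> ((\<alpha> \<inter> \<beta>) O (\<alpha> \<inter> \<gamma>)) ^^ (r ^ Suc l)"
      using p unfolding T_def N_def by (simp add: mult.commute)
  qed
qed


definition eqA :: "'a set \<Rightarrow> ('f \<Rightarrow> 'a list \<Rightarrow> 'a) \<Rightarrow> ('f,nat) trm \<Rightarrow> ('f,nat) trm \<Rightarrow> bool" where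
  "eqA A F s t \<longleftrightarrow> (\<forall>\<sigma>. range \<sigma> \<subseteq> A \<longrightarrow> eval_trm F \<sigma> s = eval_trm F \<sigma> t)"

definition repT :: "('f \<Rightarrow> nat) \<Rightarrow> 'a set \<Rightarrow> ('f \<Rightarrow> 'a list \<Rightarrow> 'a) \<Rightarrow> ('f,nat) trm \<Rightarrow> ('f,nat) trm" where
  "repT ar A F t = (SOME s. wf_trm ar s \<and> eqA A F s t)"

definition carB :: "('f \<Rightarrow> nat) \<Rightarrow> 'a set \<Rightarrow> ('f \<Rightarrow> 'a list \<Rightarrow> 'a) \<Rightarrow> ('f,nat) trm set" where
  "carB ar A F = repT ar A F ` {t. wf_trm ar t}"

definition opG :: "('f \<Rightarrow> nat) \<Rightarrow> 'a set \<Rightarrow> ('f \<Rightarrow> 'a list \<Rightarrow> 'a) \<Rightarrow> 'f \<Rightarrow> ('f,nat) trm list \<Rightarrow> ('f,nat) trm" where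
  "opG ar A F f ts = repT ar A F (Fn f ts)"

definition KB :: "('f \<Rightarrow> nat) \<Rightarrow> 'a set \<Rightarrow> ('f \<Rightarrow> 'a list \<Rightarrow> 'a) \<Rightarrow> ((nat \<Rightarrow> 'a) \<Rightarrow> bool) \<Rightarrow> ('f,nat) trm rel" where
  "KB ar A F P = {(s,t). s \<in> carB ar A F \<and> t \<in> carB ar A F \<and>
     (\<forall>\<sigma>. range \<sigma> \<subseteq> A \<and> P \<sigma> \<longrightarrow> eval_trm F \<sigma> s = eval_trm F \<sigma> t)}"

lemma rep_wf: "wf_trm ar t \<Longrightarrow> wf_trm ar (repT ar A F t) \<and> eqA A F (repT ar A F t) t"
  unfolding repT_def by (rule someI[of _ t]) (simp add: eqA_def)

lemma rep_cong: "eqA A F s t \<Longrightarrow> repT ar A F s = repT ar A F t"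
proof -
  assume "eqA A F s t"
  then have "(\<lambda>u. wf_trm ar u \<and> eqA A F u s) = (\<lambda>u. wf_trm ar u \<and> eqA A F u t)"
    unfolding eqA_def by (intro ext) auto
  then show ?thesis unfolding repT_def by simp
qed

lemma B_wf: "b \<in> carB ar A F \<Longrightarrow> wf_trm ar b"
  unfolding carB_def using rep_wf by blast

lemma B_fix: "b \<in> carB ar A F \<Longrightarrow> repT ar A F b = b"
  unfolding carB_def using rep_wf rep_cong by blast

lemma B_eq: "b \<in> carB ar A F \<Longrightarrow> b' \<in> carB ar A F \<Longrightarrow> eqA A F b b' \<Longrightarrow> b = b'"
  by (metis B_fix rep_cong)

lemma eval_rep: "wf_trm ar t \<Longrightarrow> range \<sigma> \<subseteq> A \<Longrightarrow> eval_trm F \<sigma> (repT ar A F t) = eval_trm F \<sigma> t"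
  using rep_wf unfolding eqA_def by blast

lemma rep_in: "wf_trm ar t \<Longrightarrow> repT ar A F t \<in> carB ar A F"
  unfolding carB_def by blast

lemma evalG:
  fixes A :: "'a set" and s :: "('f,nat) trm" and \<tau> :: "nat \<Rightarrow> ('f,nat) trm"
  shows "wf_trm ar s \<Longrightarrow> range \<tau> \<subseteq> carB ar A F \<Longrightarrow>
   eval_trm (opG ar A F) \<tau> s \<in> carB ar A F \<and> eqA A F (eval_trm (opG ar A F) \<tau> s) (tsubst \<tau> s)"
proof (induction s)
  case (Var x) then show ?case by (auto simp: eqA_def)
next
  case (Fn f ts)
  define xs where "xs = map (eval_trm (opG ar A F) \<tau>) ts"
  have IH: "\<And>t. t \<in> set ts \<Longrightarrow> eval_trm (opG ar A F) \<tau> t \<in> carB ar A F \<and>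
       eqA A F (eval_trm (opG ar A F) \<tau> t) (tsubst \<tau> t)"
    using Fn by auto
  have wfx: "wf_trm ar (Fn f xs)" using Fn.prems IH B_wf[of _ ar A F] unfolding xs_def by auto
  have e1: "eqA A F (opG ar A F f xs) (Fn f xs)" unfolding opG_def using rep_wf[OF wfx] by blast
  have e2: "eqA A F (Fn f xs) (tsubst \<tau> (Fn f ts))"
    unfolding eqA_def
  proof (intro allI impI)
    fix \<sigma> :: "nat \<Rightarrow> 'a" assume s: "range \<sigma> \<subseteq> A"
    have "map (eval_trm F \<sigma>) xs = map (eval_trm F \<sigma>) (map (tsubst \<tau>) ts)"
      unfolding xs_def using IH s unfolding eqA_def by auto
    then show "eval_trm F \<sigma> (Fn f xs) = eval_trm F \<sigma> (tsubst \<tau> (Fn f ts))" by simp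
  qed
  have "opG ar A F f xs \<in> carB ar A F" unfolding opG_def by (rule rep_in[OF wfx])
  moreover have "eqA A F (opG ar A F f xs) (tsubst \<tau> (Fn f ts))"
    using e1 e2 unfolding eqA_def by auto
  ultimately show ?case unfolding xs_def by simp
qed

lemma B_variety:
  fixes A :: "'a set" and \<Sigma> :: "(('f, nat) trm \<times> ('f, nat) trm) set"
  assumes wf: "\<forall>(s, t)\<in>\<Sigma>. wf_trm ar s \<and> wf_trm ar t" and alg: "in_variety ar \<Sigma> A F"
  shows "in_variety ar \<Sigma> (carB ar A F) (opG ar A F)"
  unfolding in_variety_def
proof
  show "algebra ar (carB ar A F) (opG ar A F)"
    unfolding algebra_def opG_def
  proof (intro allI impI)
    fix f xs assume "length xs = ar f \<and> set xs \<subseteq> carB ar A F"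
    then have "wf_trm ar (Fn f xs)" using B_wf[of _ ar A F] by auto
    then show "repT ar A F (Fn f xs) \<in> carB ar A F" by (rule rep_in)
  qed
next
  show "satisfies (carB ar A F) (opG ar A F) \<Sigma>"
    unfolding satisfies_def
  proof (intro ballI)
    fix p assume p: "p \<in> \<Sigma>"
    obtain s t where st: "p = (s,t)" by (cases p)
    have ws: "wf_trm ar s" "wf_trm ar t" using wf p st by auto
    have "eval_trm (opG ar A F) \<tau> s = eval_trm (opG ar A F) \<tau> t"
      if \<tau>: "range \<tau> \<subseteq> carB ar A F" for \<tau> :: "nat \<Rightarrow> ('f,nat) trm"
    proof -
    have "eqA A F (tsubst \<tau> s) (tsubst \<tau> t)"
      unfolding eqA_def
    proof (intro allI impI)
      fix \<sigma> :: "nat \<Rightarrow> 'a" assume s: "range \<sigma> \<subseteq> A"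
      have "range (\<lambda>v. eval_trm F \<sigma> (\<tau> v)) \<subseteq> A"
        using eval_in[of ar A F] alg s \<tau> B_wf unfolding in_variety_def by blast
      then show "eval_trm F \<sigma> (tsubst \<tau> s) = eval_trm F \<sigma> (tsubst \<tau> t)"
        using alg p st unfolding eval_tsubst in_variety_def satisfies_def by auto
    qed
    then have "eqA A F (eval_trm (opG ar A F) \<tau> s) (eval_trm (opG ar A F) \<tau> t)"
      using evalG[OF ws(1) \<tau>] evalG[OF ws(2) \<tau>] unfolding eqA_def by metis
    then show "eval_trm (opG ar A F) \<tau> s = eval_trm (opG ar A F) \<tau> t"
      using B_eq evalG[OF ws(1) \<tau>] evalG[OF ws(2) \<tau>] by blast
    qed
    then show "case p of (s, t) \<Rightarrow> \<forall>\<tau>. range \<tau> \<subseteq> carB ar A F \<longrightarrow>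
        eval_trm (opG ar A F) \<tau> s = eval_trm (opG ar A F) \<tau> t"
      using st by simp
  qed
qed

lemma KB_cong: "congruence ar (carB ar A F) (opG ar A F) (KB ar A F P)"
  unfolding congruence_def
proof (intro conjI allI impI)
  show "equiv (carB ar A F) (KB ar A F P)"
    unfolding equiv_def refl_on_def sym_def trans_def KB_def by auto
next
  fix f xs ys assume a: "length xs = ar f \<and> length ys = ar f \<and> list_all2 (\<lambda>x y. (x, y) \<in> KB ar A F P) xs ys"
  then have sx: "set xs \<subseteq> carB ar A F" "set ys \<subseteq> carB ar A F"
    unfolding KB_def by (auto simp: list_all2_conv_all_nth in_set_conv_nth)
  then have w: "wf_trm ar (Fn f xs)" "wf_trm ar (Fn f ys)" using a B_wf[of _ ar A F] by auto
  have "eval_trm F \<sigma> (opG ar A F f xs) = eval_trm F \<sigma> (opG ar A F f ys)"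
    if s: "range \<sigma> \<subseteq> A" "P \<sigma>" for \<sigma>
  proof -
    have "map (eval_trm F \<sigma>) xs = map (eval_trm F \<sigma>) ys"
      using a s unfolding KB_def by (auto simp: list_all2_conv_all_nth intro!: nth_equalityI)
    then show ?thesis unfolding opG_def using eval_rep[OF w(1) s(1)] eval_rep[OF w(2) s(1)] by simp
  qed
  then show "(opG ar A F f xs, opG ar A F f ys) \<in> KB ar A F P"
    unfolding KB_def opG_def using rep_in[OF w(1)] rep_in[OF w(2)] by auto
qed

definition sig :: "'a \<Rightarrow> 'a \<Rightarrow> 'a \<Rightarrow> 'a \<Rightarrow> nat \<Rightarrow> 'a" where
  "sig a b c d = (\<lambda>n. if n = 0 then a else if n = 1 then b else if n = 2 then c else d)"

lemma sig_range: "a\<in>A \<Longrightarrow> b\<in>A \<Longrightarrow> c\<in>A \<Longrightarrow> d\<in>A \<Longrightarrow> range (sig a b c d) \<subseteq> A"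
  unfolding sig_def by auto


theorem proposition7p1:
  fixes ar :: "'f \<Rightarrow> nat"
    and \<Sigma> :: "(('f, nat) trm \<times> ('f, nat) trm) set"
    and r l :: nat
    and A :: "'a set" and F :: "'f \<Rightarrow> 'a list \<Rightarrow> 'a"
    and \<alpha> \<beta> \<gamma> :: "'a rel"
  assumes wf: "\<forall>(s, t)\<in>\<Sigma>. wf_trm ar s \<and> wf_trm ar t"
    and r: "r \<ge> 1"
    and modular: "\<And>(B :: ('f, nat) trm set) G. in_variety ar \<Sigma> B G \<Longrightarrow> modular3_alg ar B G (2 * r)"
    and l: "l \<ge> 1"
    and alg: "in_variety ar \<Sigma> A F"
    and cong: "congruence ar A F \<alpha>" "congruence ar A F \<beta>" "congruence ar A F \<gamma>"
  shows "Arel l \<alpha> \<beta> \<gamma> \<subseteq> alt_comp (\<alpha> \<inter> \<beta>) (\<alpha> \<inter> \<gamma>) (2 * r ^ l)"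
proof -
  define B where "B = carB ar A F"
  define G where "G = opG ar A F"
  define K\<alpha> where "K\<alpha> = KB ar A F (\<lambda>\<sigma>. \<sigma> 0 = \<sigma> 3 \<and> \<sigma> 1 = \<sigma> 2)"
  define K\<beta> where "K\<beta> = KB ar A F (\<lambda>\<sigma>. \<sigma> 0 = \<sigma> 1 \<and> \<sigma> 2 = \<sigma> 3)"
  define K\<gamma> where "K\<gamma> = KB ar A F (\<lambda>\<sigma>. \<sigma> 1 = \<sigma> (2::nat))"
  define X where "X = repT ar A F (Var 0)"
  define Y where "Y = repT ar A F (Var 1)"
  define Z where "Z = repT ar A F (Var 2)"
  define W where "W = repT ar A F (Var 3)"
  have evV: "eval_trm F \<sigma> (repT ar A F (Var n)) = \<sigma> n" if "range \<sigma> \<subseteq> A" for \<sigma> n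
    using eval_rep[of ar "Var n" \<sigma> A F] that by simp
  have inB: "X \<in> B" "Y \<in> B" "Z \<in> B" "W \<in> B"
    unfolding X_def Y_def Z_def W_def B_def by (auto intro: rep_in)
  have "modular3_alg ar B G (2 * r)"
    unfolding B_def G_def by (rule modular[OF B_variety[OF wf alg]])
  then have incl: "K\<alpha> \<inter> (K\<beta> O (K\<alpha> \<inter> K\<gamma>) O K\<beta>) \<subseteq> alt_comp (K\<alpha> \<inter> K\<beta>) (K\<alpha> \<inter> K\<gamma>) (2 * r)"
    unfolding modular3_alg_def K\<alpha>_def K\<beta>_def K\<gamma>_def B_def G_def using KB_cong by blast
  have "(X,Y) \<in> K\<beta>" "(Y,Z) \<in> K\<alpha> \<inter> K\<gamma>" "(Z,W) \<in> K\<beta>" "(X,W) \<in> K\<alpha>"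
    using inB unfolding K\<alpha>_def K\<beta>_def K\<gamma>_def KB_def X_def Y_def Z_def W_def B_def
    by (auto simp: evV)
  then have "(X,W) \<in> K\<alpha> \<inter> (K\<beta> O (K\<alpha> \<inter> K\<gamma>) O K\<beta>)" by blast
  with incl have "(X,W) \<in> ((K\<alpha> \<inter> K\<beta>) O (K\<alpha> \<inter> K\<gamma>)) ^^ r"
    using alt_relpow by blast
  from chain_ex[OF this] obtain e where e0: "e 0 = X" and er: "e (2*r) = W"
    and ech: "\<forall>j<r. (e (2*j), e (2*j+1)) \<in> K\<alpha> \<inter> K\<beta> \<and> (e (2*j+1), e (2*j+2)) \<in> K\<alpha> \<inter> K\<gamma>"
    by blast
  have eB: "e i \<in> B" if "i \<le> 2*r" for i
  proof (cases "i = 2*r")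
    case True then show ?thesis using er inB by simp
  next
    case False
    then have j: "i div 2 < r" using that by auto
    have "i = 2*(i div 2) \<or> i = 2*(i div 2)+1" by auto
    moreover have "(e (2*(i div 2)), e (2*(i div 2)+1)) \<in> K\<alpha>" using ech j by blast
    ultimately show ?thesis unfolding K\<alpha>_def KB_def B_def by auto
  qed
  have ewf: "wf_trm ar (e i)" if "i \<le> 2*r" for i
    using eB[OF that] B_wf unfolding B_def by blast
  define m where "m i a b c d = eval_trm F (sig a b c d) (e i)" for i a b c d
  have evK: "eval_trm F (sig a b c d) s = eval_trm F (sig a b c d) t"
    if "(s,t) \<in> KB ar A F P" "P (sig a b c d)" "a\<in>A" "b\<in>A" "c\<in>A" "d\<in>A" for s t P a b c d
    using that sig_range[of a A b c d] unfolding KB_def by blast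
  have main: "A' l' \<alpha> \<beta> \<gamma> \<subseteq> ((\<alpha> \<inter> \<beta>) O (\<alpha> \<inter> \<gamma>)) ^^ (r ^ l')" for l'
  proof (rule main_abstract[where m=m and ar=ar and A=A and F=F, OF r _ _ _ _ _ _ _ cong])
    fix i \<theta> a b c d a' b' c' d'
    assume "i \<le> 2*r" "congruence ar A F \<theta>" "(a,a')\<in>\<theta>" "(b,b')\<in>\<theta>" "(c,c')\<in>\<theta>" "(d,d')\<in>\<theta>"
    then show "(m i a b c d, m i a' b' c' d') \<in> \<theta>"
      unfolding m_def by (intro eval_cong[OF _ ewf]) (auto simp: sig_def)
  next
    fix a b c d assume "a\<in>A" "b\<in>A" "c\<in>A" "d\<in>A"
    then show "m 0 a b c d = a" "m (2*r) a b c d = d"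
      unfolding m_def e0 er X_def W_def using sig_range[of a A b c d]
      by (auto simp: evV sig_def)
  next
    fix j a d assume "j < r" "a\<in>A" "d\<in>A"
    then have h: "(e (2*j), e (2*j+1)) \<in> K\<beta>" using ech by blast
    show "m (2*j) a a d d = m (2*j+1) a a d d"
      unfolding m_def using evK[OF h[unfolded K\<beta>_def] _ \<open>a\<in>A\<close> \<open>a\<in>A\<close> \<open>d\<in>A\<close> \<open>d\<in>A\<close>]
      by (simp add: sig_def)
  next
    fix j a b d assume "j < r" "a\<in>A" "b\<in>A" "d\<in>A"
    then have h: "(e (2*j+1), e (2*j+2)) \<in> K\<gamma>" using ech by blast
    show "m (2*j+1) a b b d = m (2*j+2) a b b d"
      unfolding m_def using evK[OF h[unfolded K\<gamma>_def] _ \<open>a\<in>A\<close> \<open>b\<in>A\<close> \<open>b\<in>A\<close> \<open>d\<in>A\<close>]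
      by (simp add: sig_def)
  next
    fix j a b assume "j < r" "a\<in>A" "b\<in>A"
    then have h: "(e (2*j), e (2*j+1)) \<in> K\<alpha>" "(e (2*j+1), e (2*j+2)) \<in> K\<alpha>" using ech by blast+
    show "m (2*j) a b b a = m (2*j+1) a b b a"
      unfolding m_def using evK[OF h(1)[unfolded K\<alpha>_def] _ \<open>a\<in>A\<close> \<open>b\<in>A\<close> \<open>b\<in>A\<close> \<open>a\<in>A\<close>]
      by (simp add: sig_def)
    show "m (2*j+1) a b b a = m (2*j+2) a b b a"
      unfolding m_def using evK[OF h(2)[unfolded K\<alpha>_def] _ \<open>a\<in>A\<close> \<open>b\<in>A\<close> \<open>b\<in>A\<close> \<open>a\<in>A\<close>]
      by (simp add: sig_def)
  qed
  obtain l' where l': "l = Suc l'" using l by (cases l) auto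
  have "alt_comp (\<alpha> \<inter> \<beta>) (\<alpha> \<inter> \<gamma>) (2 * r ^ l) = ((\<alpha> \<inter> \<beta>) O (\<alpha> \<inter> \<gamma>)) ^^ (r ^ l)"
    by (rule alt_relpow)
  moreover have "Arel l \<alpha> \<beta> \<gamma> = A' l \<alpha> \<beta> \<gamma>" unfolding l' by (rule Arel_A')
  ultimately show ?thesis using main[of l] by simp
qed

end
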